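(* For every positive integer $k$, \[ \mu(1+x+y_1,\,1+x+y_2,\,\ldots,\,1+x+y_k) \;=\; \frac{1}{\pi}\,\mathrm{Ls}_{k+1}\!\left(\frac{\pi}{3}\right) \;-\; \frac{1}{\pi}\,\mathrm{Ls}_{k+1}(\pi), \] where the left-hand side is the multiple Mahler measure of the $k$ polynomials $1+x+y_j$ ($j=1,\dots,k$) in the $k+1$ variables $x,y_1,\ldots,y_k$.
   Context: For functions $P_1,\ldots,P_k$ of $n$ variables, the multiple Mahler measure is \[ \mu(P_1,\ldots,P_k) := \int_0^1\cdots\int_0^1 \prod_{j=1}^k \log\left|P_j\left(e^{2\pi i t_1},\ldots,e^{2\pi i t_n}\right)\right|\,\mathrm{d}t_1\cdots\mathrm{d}t_n . \] For integers $n\ge 1$ and real $\sigma$, the log-sine integral is $\mathrm{Ls}_n(\sigma) := -\int_0^{\sigma}\log^{n-1}\left|2\sin\frac{\theta}{2}\right|\,\mathrm{d}\theta$. *)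

theory Defs
  imports "HOL-Analysis.Analysis"
begin

definition multi_mahler :: "nat \<Rightarrow> ((nat \<Rightarrow> complex) \<Rightarrow> complex) list \<Rightarrow> real" where
  "multi_mahler n Ps =
     (\<integral>t. (\<Prod>P\<leftarrow>Ps. ln (cmod (P (\<lambda>i. exp (2 * of_real pi * \<i> * of_real (t i))))))
        \<partial>(PiM {..<n} (\<lambda>_. restrict_space lborel {0..1::real})))"

definition Ls :: "nat \<Rightarrow> real \<Rightarrow> real" where
  "Ls n \<sigma> = - (LBINT \<theta>=0..\<sigma>. (ln \<bar>2 * sin (\<theta> / 2)\<bar>) ^ (n - 1))"

end

theory Submission
  imports Defs "HOL-Complex_Analysis.Complex_Analysis"
begin

lemma circle_mean_Ln:
  fixes w :: complex
  assumes w: "norm w < 1"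
  shows "((\<lambda>t. ln (cmod (1 + w * exp (2 * of_real pi * \<i> * of_real t)))) has_integral 0) {0..1}"
proof -
  define f where "f = (\<lambda>u. Ln (1 + w * u))"
  have re: "Re (1 + w * u) > 0" if "norm u \<le> 1" for u
  proof -
    have "norm (w * u) < 1" using w that
      by (metis mult_le_one norm_ge_zero norm_mult le_less_trans less_imp_le mult_strict_right_mono
          mult_less_cancel_right1 not_le)
    hence "\<bar>Re (w*u)\<bar> < 1" using abs_Re_le_cmod le_less_trans by blast
    thus ?thesis by simp
  qed
  have nz: "1 + w * u \<notin> \<real>\<^sub>\<le>\<^sub>0" if "norm u \<le> 1" for u
    using re[OF that] by (auto simp: complex_nonpos_Reals_iff)
  have hol: "f holomorphic_on cball 0 1"
    unfolding f_def by (intro holomorphic_intros) (use nz in auto)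
  have "((\<lambda>u. f u/(u-0)) has_contour_integral (2 * of_real pi * \<i> * f 0)) (circlepath 0 1)"
    by (rule Cauchy_integral_circlepath)
       (use hol in \<open>auto intro: holomorphic_on_imp_continuous_on holomorphic_on_subset\<close>)
  hence "((\<lambda>u. f u/u) has_contour_integral 0) (circlepath 0 1)" by (simp add: f_def)
  hence A: "((\<lambda>x. f (exp (2 * of_real pi * \<i> * of_real x)) / exp (2 * of_real pi * \<i> * of_real x)
        * (2 * pi * \<i> * exp(2 * of_real pi * \<i> * x))) has_integral 0) {0..1}"
    unfolding has_contour_integral vector_derivative_circlepath by (simp add: circlepath)
  have B: "((\<lambda>x. (2 * pi * \<i>) * f (exp (2 * of_real pi * \<i> * of_real x))) has_integral 0) {0..1}"
    using A by (simp add: field_simps)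
  have C: "((\<lambda>x. f (exp (2 * of_real pi * \<i> * of_real x))) has_integral 0) {0..1}"
    using has_integral_mult_right[where c="1/(2 * complex_of_real pi * \<i>)", OF B] by simp
  have "((\<lambda>x. Re (f (exp (2 * of_real pi * \<i> * of_real x)))) has_integral 0) {0..1}"
    using has_integral_Re[OF C] by simp
  moreover have "Re (f (exp (2 * of_real pi * \<i> * of_real x))) =
      ln (cmod (1 + w * exp (2 * of_real pi * \<i> * of_real x)))" for x
  proof -
    have "norm (exp (2 * of_real pi * \<i> * of_real x)) \<le> 1" by (simp add: norm_exp)
    from re[OF this] have "1 + w * exp (2 * of_real pi * \<i> * of_real x) \<noteq> 0"
      by (metis zero_complex.sel(1) less_irrefl)
    thus ?thesis by (simp add: f_def)
  qed
  ultimately show ?thesis by simp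
qed
definition ee :: "real \<Rightarrow> complex" where "ee t = exp (2 * of_real pi * \<i> * of_real t)"

lemma norm_ee [simp]: "norm (ee t) = 1"
  by (simp add: ee_def norm_exp_eq_Re)

lemma continuous_on_ee [continuous_intros]: "continuous_on A ee"
  unfolding ee_def by (intro continuous_intros)

abbreviation "MM \<equiv> restrict_space lborel {0..1::real}"

lemma cont_MM:
  fixes g :: "real \<Rightarrow> real"
  assumes "continuous_on {0..1} g"
  shows "integrable MM g" "integral\<^sup>L MM g = integral {0..1} g"
proof -
  have i: "integrable lborel (\<lambda>x. indicator {0..1::real} x *\<^sub>R g x)"
    by (rule borel_integrable_compact) (use assms in auto)
  then show "integrable MM g" by (subst integrable_restrict_space) auto
  have "integral\<^sup>L MM g = (LINT x:{0..1}|lborel. g x)"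
    by (subst integral_restrict_space) (auto simp: set_lebesgue_integral_def)
  also have "\<dots> = integral {0..1} g"
    by (rule set_borel_integral_eq_integral) (use i in \<open>simp add: set_integrable_def\<close>)
  finally show "integral\<^sup>L MM g = integral {0..1} g" .
qed


lemma circle_mean_Ln':
  assumes "norm w < 1"
  shows "((\<lambda>t. ln (cmod (1 + w * ee t))) has_integral 0) {0..1}"
  using circle_mean_Ln[OF assms] by (simp add: ee_def)

lemma ee_cnj: "ee t * cnj (ee t) = 1"
  by (metis complex_norm_square norm_ee of_real_1 power_one)

lemma one_D:
  fixes a :: complex
  assumes a: "norm a \<noteq> 1"
  shows "((\<lambda>t. ln (cmod (a + ee t))) has_integral max 0 (ln (norm a))) {0..1}"
proof (cases "norm a < 1")
  case True
  have "cmod (a + ee t) = cmod (1 + cnj a * ee t)" for t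
  proof -
    have "a + ee t = ee t * (1 + a * cnj (ee t))"
      using ee_cnj[of t] by (simp add: algebra_simps)
    hence "cmod (a + ee t) = cmod (1 + a * cnj (ee t))" by (simp add: norm_mult)
    also have "\<dots> = cmod (cnj (1 + a * cnj (ee t)))" by (rule complex_mod_cnj[symmetric])
    also have "\<dots> = cmod (1 + cnj a * ee t)" by simp
    finally show ?thesis .
  qed
  moreover have "max 0 (ln (norm a)) = 0"
    using True by (cases "a = 0") auto
  ultimately show ?thesis using circle_mean_Ln'[of "cnj a"] True by simp
next
  case False
  hence a1: "norm a > 1" using a by simp
  hence a0: "a \<noteq> 0" by auto
  have "cmod (a + ee t) = norm a * cmod (1 + inverse a * ee t)" for t
  proof -
    have "a + ee t = a * (1 + inverse a * ee t)" using a0 by (simp add: field_simps)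
    thus ?thesis by (simp add: norm_mult)
  qed
  hence eq: "ln (cmod (a + ee t)) = ln (norm a) + ln (cmod (1 + inverse a * ee t))" for t
  proof -
    have "cmod (1 + inverse a * ee t) > 0"
    proof -
      have "norm (inverse a * ee t) < 1" using a1 by (simp add: norm_mult norm_inverse inverse_less_1_iff)
      hence "1 + inverse a * ee t \<noteq> 0"
        by (metis add.inverse_unique norm_minus_cancel norm_one less_irrefl)
      thus ?thesis by simp
    qed
    thus ?thesis using \<open>\<And>t. cmod (a + ee t) = norm a * cmod (1 + inverse a * ee t)\<close>[of t] a0
      by (simp add: ln_mult)
  qed
  have "norm (inverse a) < 1" using a1 by (simp add: norm_inverse inverse_less_1_iff)
  from has_integral_add[OF has_integral_const_real[of "ln (norm a)" 0 1] circle_mean_Ln'[OF this]]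
  have "((\<lambda>t. ln (norm a) + ln (cmod (1 + inverse a * ee t))) has_integral ln (norm a)) {0..1}"
    by simp
  moreover have "max 0 (ln (norm a)) = ln (norm a)" using a1 by simp
  ultimately show ?thesis by (simp add: eq)
qed

lemma one_D_cont:
  fixes a :: complex
  assumes a: "norm a \<noteq> 1"
  shows "continuous_on {0..1} (\<lambda>t. ln (cmod (a + ee t)))"
proof -
  have "a + ee t \<noteq> 0" for t
  proof
    assume "a + ee t = 0" hence "a = - ee t" by (simp add: eq_neg_iff_add_eq_0)
    hence "norm a = 1" by simp
    thus False using a by simp
  qed
  thus ?thesis by (intro continuous_intros) auto
qed


lemma one_D_abs:
  fixes a :: complex
  assumes a: "norm a \<noteq> 1" "norm a \<le> 2"
  shows "integral {0..1} (\<lambda>t. \<bar>ln (cmod (a + ee t))\<bar>) \<le> 2 * ln 3"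
proof -
  let ?h = "\<lambda>t. ln (cmod (a + ee t))"
  have c: "continuous_on {0..1} ?h" by (rule one_D_cont[OF a(1)])
  have hi: "(?h has_integral max 0 (ln (norm a))) {0..1}" by (rule one_D[OF a(1)])
  have cp: "continuous_on {0..1} (\<lambda>t. max 0 (?h t))" by (rule continuous_on_max[OF continuous_on_const c])
  have ip: "(\<lambda>t. max 0 (?h t)) integrable_on {0..1}" by (rule integrable_continuous_interval[OF cp])
  have le: "max 0 (?h t) \<le> ln 3" for t
  proof -
    have "cmod (a + ee t) \<le> 3" using a(2) norm_triangle_ineq[of a "ee t"] by simp
    show ?thesis
    proof (cases "cmod (a + ee t) = 0")
      case True thus ?thesis by simp
    next
      case False
      hence "ln (cmod (a + ee t)) \<le> ln 3" using \<open>cmod (a + ee t) \<le> 3\<close> by simp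
      thus ?thesis by simp
    qed
  qed
  have "integral {0..1} (\<lambda>t. max 0 (?h t)) \<le> integral {0..1} (\<lambda>t::real. ln 3)"
    using ip le by (intro Henstock_Kurzweil_Integration.integral_le) auto
  hence I1: "integral {0..1} (\<lambda>t. max 0 (?h t)) \<le> ln 3" by simp
  have eq: "\<bar>?h t\<bar> = 2 * max 0 (?h t) - ?h t" for t by auto
  have "integral {0..1} (\<lambda>t. \<bar>?h t\<bar>) = integral {0..1} (\<lambda>t. 2 * max 0 (?h t) - ?h t)"
    by (simp only: eq)
  also have "\<dots> = 2 * integral {0..1} (\<lambda>t. max 0 (?h t)) - integral {0..1} ?h"
  proof -
    have hi': "?h integrable_on {0..1}" using hi by (rule has_integral_integrable)
    have i2: "(\<lambda>t. 2 * max 0 (?h t)) integrable_on {0..1}" using integrable_on_mult_right[OF ip, of 2] by simp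
    show ?thesis using integral_diff[OF i2 hi'] integral_mult_right[where c="2::real"] by simp
  qed
  also have "\<dots> = 2 * integral {0..1} (\<lambda>t. max 0 (?h t)) - max 0 (ln (norm a))"
    using hi by (simp add: integral_unique)
  also have "\<dots> \<le> 2 * ln 3" using I1 by simp
  finally show ?thesis .
qed

lemma one_D_MM:
  fixes a :: complex
  assumes a: "norm a \<noteq> 1" "norm a \<le> 2"
  shows "integrable MM (\<lambda>t. ln (cmod (a + ee t)))"
    "integral\<^sup>L MM (\<lambda>t. ln (cmod (a + ee t))) = max 0 (ln (norm a))"
    "integral\<^sup>L MM (\<lambda>t. \<bar>ln (cmod (a + ee t))\<bar>) \<le> 2 * ln 3"
proof -
  have c: "continuous_on {0..1} (\<lambda>t. ln (cmod (a + ee t)))" by (rule one_D_cont[OF a(1)])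
  show "integrable MM (\<lambda>t. ln (cmod (a + ee t)))" by (rule cont_MM[OF c])
  show "integral\<^sup>L MM (\<lambda>t. ln (cmod (a + ee t))) = max 0 (ln (norm a))"
    using cont_MM(2)[OF c] one_D[OF a(1)] by (simp add: integral_unique)
  have c2: "continuous_on {0..1} (\<lambda>t. \<bar>ln (cmod (a + ee t))\<bar>)" by (rule continuous_on_rabs[OF c])
  show "integral\<^sup>L MM (\<lambda>t. \<bar>ln (cmod (a + ee t))\<bar>) \<le> 2 * ln 3"
    using cont_MM(2)[OF c2] one_D_abs[OF a] by simp
qed


lemma cube_root_aux:
  fixes z :: complex
  assumes "norm z = 1" "norm (1 + z) = 1"
  shows "z ^ 3 = 1"
proof -
  have 1: "z * cnj z = 1" using complex_norm_square[of z] assms(1) by simp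
  have 2: "(1 + z) * (1 + cnj z) = 1" using complex_norm_square[of "1+z"] assms(2) by simp
  show ?thesis using 1 2 by algebra
qed

lemma AE_MM_good: "AE s in MM. norm (1 + ee s) \<noteq> 1"
proof -
  have sub: "{s. norm (1 + ee s) = 1} \<subseteq> range (\<lambda>n::int. real_of_int n / 3)"
  proof
    fix s assume "s \<in> {s. norm (1 + ee s) = 1}"
    hence "ee s ^ 3 = 1" using cube_root_aux[of "ee s"] by simp
    hence "exp (complex_of_real (6 * pi * s) * \<i>) = 1"
      by (simp add: ee_def exp_of_nat_mult[symmetric] algebra_simps)
    then obtain n :: int where "6 * pi * s = of_int (2 * n) * pi"
      by (auto simp: exp_eq_1)
    hence "s = real_of_int n / 3" by (simp add: field_simps)
    thus "s \<in> range (\<lambda>n::int. real_of_int n / 3)" by auto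
  qed
  have cnt: "countable (range (\<lambda>n::int. real_of_int n / 3))" by simp
  have "{s. norm (1 + ee s) = 1} \<in> null_sets lborel"
    by (rule null_sets_subset[OF countable_imp_null_set_lborel[OF cnt] _ sub])
       (simp add: ee_def)
  hence "AE s in lborel. norm (1 + ee s) \<noteq> 1"
    by (rule AE_not_in[THEN AE_mp]) auto
  thus ?thesis by (subst AE_restrict_space_iff) (auto elim: AE_mp)
qed


lemma ee_measurable[measurable]: "ee \<in> borel_measurable borel"
  by (rule borel_measurable_continuous_onI) (rule continuous_on_ee)

lemma fin_MM: "finite_measure MM"
  by (rule finite_measureI) (simp add: emeasure_restrict_space space_restrict_space)

lemma space_MM: "space MM = {0..1}"
  by (simp add: space_restrict_space)

lemma h_meas0:
  "(\<lambda>(s,t). ln (cmod (1 + ee s + ee t))) \<in> borel_measurable (borel \<Otimes>\<^sub>M borel)"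
    by measurable

lemma id_MM: "(\<lambda>x. x) \<in> measurable MM borel"
  by (rule measurable_restrict_space1) simp

lemma id_MM2: "(\<lambda>x. x) \<in> measurable (MM \<Otimes>\<^sub>M MM) (borel \<Otimes>\<^sub>M borel)"
proof -
  have f: "fst \<in> measurable (MM \<Otimes>\<^sub>M MM) borel"
    using measurable_compose[OF measurable_fst id_MM] by blast
  have g: "snd \<in> measurable (MM \<Otimes>\<^sub>M MM) borel"
    using measurable_compose[OF measurable_snd id_MM] by blast
  show ?thesis using measurable_Pair[OF f g] by simp
qed

lemma h_meas[measurable]:
  "(\<lambda>(s,t). ln (cmod (1 + ee s + ee t))) \<in> borel_measurable (MM \<Otimes>\<^sub>M MM)"
  using measurable_comp[OF id_MM2 h_meas0] by (simp add: comp_def)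

lemma sf_MM: "sigma_finite_measure MM"
  by (rule finite_measure.axioms(1)[OF fin_MM])

lemma prod_sf_MM: "product_sigma_finite (\<lambda>_::nat. MM)"
  by (simp add: product_sigma_finite_def sf_MM)

lemma main_integrable:
  fixes J :: "nat set"
  assumes J: "finite J" "0 \<notin> J"
  shows "integrable (PiM (insert 0 J) (\<lambda>_. MM)) (\<lambda>t. \<Prod>j\<in>J. ln (cmod (1 + ee (t 0) + ee (t j))))"
proof (rule integrableI_bounded)
  interpret finite_measure MM by (rule fin_MM)
  interpret P: product_sigma_finite "\<lambda>_::nat. MM" by (rule prod_sf_MM)
  define h where "h s t = ln (cmod (1 + ee s + ee t))" for s t
  have hm: "case_prod h \<in> borel_measurable (MM \<Otimes>\<^sub>M MM)" unfolding h_def by (rule h_meas)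
  have hm1: "h s \<in> borel_measurable MM" if "s \<in> space MM" for s
    using measurable_Pair2[OF hm that] by simp
  let ?F = "\<lambda>t. \<Prod>j\<in>J. h (t 0) (t j)"
  have Fm: "?F \<in> borel_measurable (PiM (insert 0 J) (\<lambda>_. MM))"
    unfolding h_def by measurable
  show "(\<lambda>t. \<Prod>j\<in>J. ln (cmod (1 + ee (t 0) + ee (t j)))) \<in> borel_measurable (PiM (insert 0 J) (\<lambda>_. MM))"
    using Fm unfolding h_def .
  have "(\<integral>\<^sup>+ t. ennreal (norm (?F t)) \<partial>PiM (insert 0 J) (\<lambda>_. MM)) =
      (\<integral>\<^sup>+ s. (\<integral>\<^sup>+ x. ennreal (norm (?F (x(0 := s)))) \<partial>PiM J (\<lambda>_. MM)) \<partial>MM)"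
    by (rule P.product_nn_integral_insert_rev) (use J Fm in auto)
  also have "\<dots> = (\<integral>\<^sup>+ s. (\<Prod>j\<in>J. \<integral>\<^sup>+ t. ennreal \<bar>h s t\<bar> \<partial>MM) \<partial>MM)"
  proof (rule nn_integral_cong)
    fix s assume s: "s \<in> space MM"
    have "(\<integral>\<^sup>+ x. ennreal (norm (?F (x(0 := s)))) \<partial>PiM J (\<lambda>_. MM)) =
          (\<integral>\<^sup>+ x. (\<Prod>j\<in>J. ennreal \<bar>h s (x j)\<bar>) \<partial>PiM J (\<lambda>_. MM))"
    proof (rule nn_integral_cong)
      fix x
      have "?F (x(0 := s)) = (\<Prod>j\<in>J. h s (x j))"
        using J(2) by (intro prod.cong) auto
      thus "ennreal (norm (?F (x(0 := s)))) = (\<Prod>j\<in>J. ennreal \<bar>h s (x j)\<bar>)"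
        by (simp add: prod_norm prod_ennreal abs_prod)
    qed
    also have "\<dots> = (\<Prod>j\<in>J. \<integral>\<^sup>+ t. ennreal \<bar>h s t\<bar> \<partial>MM)"
      by (rule P.product_nn_integral_prod) (use J hm1[OF s] in auto)
    finally show "(\<integral>\<^sup>+ x. ennreal (norm (?F (x(0 := s)))) \<partial>PiM J (\<lambda>_. MM)) =
          (\<Prod>j\<in>J. \<integral>\<^sup>+ t. ennreal \<bar>h s t\<bar> \<partial>MM)" .
  qed
  also have "\<dots> \<le> (\<integral>\<^sup>+ s. ennreal ((2 * ln 3) ^ card J) \<partial>MM)"
  proof (rule nn_integral_mono_AE)
    show "AE s in MM. (\<Prod>j\<in>J. \<integral>\<^sup>+ t. ennreal \<bar>h s t\<bar> \<partial>MM) \<le> ennreal ((2 * ln 3) ^ card J)"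
      using AE_MM_good AE_space
    proof eventually_elim
      case (elim s)
      hence s01: "s \<in> {0..1}" by (simp add: space_MM)
      have n2: "norm (1 + ee s) \<le> 2" using norm_triangle_ineq[of 1 "ee s"] by simp
      note od = one_D_MM[OF elim(1) n2]
      have hs: "h s = (\<lambda>t. ln (cmod (1 + ee s + ee t)))" by (simp add: h_def fun_eq_iff)
      have "(\<integral>\<^sup>+ t. ennreal \<bar>h s t\<bar> \<partial>MM) = ennreal (\<integral> t. \<bar>h s t\<bar> \<partial>MM)"
        by (rule nn_integral_eq_integral) (use od(1) in \<open>auto simp: hs\<close>)
      also have "\<dots> \<le> ennreal (2 * ln 3)"
        using od(3) by (intro ennreal_leI) (simp add: hs)
      finally have le: "(\<integral>\<^sup>+ t. ennreal \<bar>h s t\<bar> \<partial>MM) \<le> ennreal (2 * ln 3)" .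
      have "(\<Prod>j\<in>J. \<integral>\<^sup>+ t. ennreal \<bar>h s t\<bar> \<partial>MM) \<le> (\<Prod>j\<in>J. ennreal (2 * ln 3))"
        by (rule prod_mono_ennreal) (use le in auto)
      also have "\<dots> = ennreal ((2 * ln 3) ^ card J)"
        by (simp add: prod_ennreal ennreal_power)
      finally show ?case .
    qed
  qed
  also have "\<dots> < \<infinity>"
    by (simp add: emeasure_restrict_space space_MM ennreal_mult_less_top)
  finally show "(\<integral>\<^sup>+ t. ennreal (norm (\<Prod>j\<in>J. ln (cmod (1 + ee (t 0) + ee (t j))))) \<partial>PiM (insert 0 J) (\<lambda>_. MM)) < \<infinity>"
    unfolding h_def .
qed

lemma main_value:
  fixes J :: "nat set"
  assumes J: "finite J" "0 \<notin> J"
  shows "integral\<^sup>L (PiM (insert 0 J) (\<lambda>_. MM)) (\<lambda>t. \<Prod>j\<in>J. ln (cmod (1 + ee (t 0) + ee (t j))))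
       = integral\<^sup>L MM (\<lambda>s. (max 0 (ln (norm (1 + ee s)))) ^ card J)"
proof -
  interpret finite_measure MM by (rule fin_MM)
  interpret P: product_sigma_finite "\<lambda>_::nat. MM" by (rule prod_sf_MM)
  interpret PJ: sigma_finite_measure "PiM J (\<lambda>_. MM)"
    using P.sigma_finite J(1) by blast
  define h where "h s t = ln (cmod (1 + ee s + ee t))" for s t
  have hm: "case_prod h \<in> borel_measurable (MM \<Otimes>\<^sub>M MM)" unfolding h_def by (rule h_meas)
  let ?F = "\<lambda>t. \<Prod>j\<in>J. h (t 0) (t j)"
  define \<phi> where "\<phi> s = (\<integral>y. (\<Prod>j\<in>J. h s (y j)) \<partial>PiM J (\<lambda>_. MM))" for s
  have \<phi>m: "\<phi> \<in> borel_measurable MM"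
  proof -
    have "(\<lambda>(s, y). \<Prod>j\<in>J. h s (y j)) \<in> borel_measurable (MM \<Otimes>\<^sub>M PiM J (\<lambda>_. MM))"
    proof -
      have "(\<lambda>(s, y). h s (y j)) \<in> borel_measurable (MM \<Otimes>\<^sub>M PiM J (\<lambda>_. MM))" if "j \<in> J" for j
      proof -
        have "(\<lambda>(s, y). (s, y j)) \<in> measurable (MM \<Otimes>\<^sub>M PiM J (\<lambda>_. MM)) (MM \<Otimes>\<^sub>M MM)"
          using that by measurable
        from measurable_comp[OF this hm] show ?thesis by (simp add: comp_def case_prod_beta)
      qed
      thus ?thesis by (auto intro!: borel_measurable_prod simp: case_prod_beta)
    qed
    thus ?thesis
      unfolding \<phi>_def by (rule PJ.borel_measurable_lebesgue_integral[of "\<lambda>s y. \<Prod>j\<in>J. h s (y j)", simplified])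
  qed
  have int: "integrable (PiM ({0} \<union> J) (\<lambda>_. MM)) ?F"
    using main_integrable[OF J] by (simp add: h_def)
  have "integral\<^sup>L (PiM (insert 0 J) (\<lambda>_. MM)) ?F = integral\<^sup>L (PiM ({0} \<union> J) (\<lambda>_. MM)) ?F"
    by simp
  also have "\<dots> = (\<integral>x. (\<integral>y. ?F (merge {0} J (x, y)) \<partial>PiM J (\<lambda>_. MM)) \<partial>PiM {0} (\<lambda>_. MM))"
    by (rule P.product_integral_fold) (use J int in auto)
  also have "\<dots> = (\<integral>x. \<phi> (x 0) \<partial>PiM {0::nat} (\<lambda>_. MM))"
  proof -
    have eqx: "(\<integral>y. ?F (merge {0} J (x, y)) \<partial>PiM J (\<lambda>_. MM)) = \<phi> (x 0)" for x :: "nat \<Rightarrow> real"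
      unfolding \<phi>_def
    proof (rule Bochner_Integration.integral_cong[OF refl])
      fix y assume y: "y \<in> space (PiM J (\<lambda>_. MM))"
      show "?F (merge {0} J (x, y)) = (\<Prod>j\<in>J. h (x 0) (y j))"
        using J(2) by (intro prod.cong) (auto simp: merge_def)
    qed
    show ?thesis by (simp only: eqx)
  qed
  also have "\<dots> = integral\<^sup>L MM \<phi>"
    by (rule P.product_integral_singleton[OF \<phi>m])
  also have "\<dots> = integral\<^sup>L MM (\<lambda>s. (max 0 (ln (norm (1 + ee s)))) ^ card J)"
  proof (rule integral_cong_AE)
    show "\<phi> \<in> borel_measurable MM" by (rule \<phi>m)
    show "(\<lambda>s. (max 0 (ln (norm (1 + ee s)))) ^ card J) \<in> borel_measurable MM"
    proof -
      have "(\<lambda>s. (max 0 (ln (norm (1 + ee s)))) ^ card J) \<in> borel_measurable borel"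
        by measurable
      from measurable_compose[OF id_MM this] show ?thesis .
    qed
    show "AE s in MM. \<phi> s = (max 0 (ln (norm (1 + ee s)))) ^ card J"
      using AE_MM_good AE_space
    proof eventually_elim
      case (elim s)
      have n2: "norm (1 + ee s) \<le> 2" using norm_triangle_ineq[of 1 "ee s"] by simp
      note od = one_D_MM[OF elim(1) n2]
      have hs: "h s = (\<lambda>t. ln (cmod (1 + ee s + ee t)))" by (simp add: h_def fun_eq_iff)
      have "\<phi> s = (\<Prod>j\<in>J. integral\<^sup>L MM (h s))"
        unfolding \<phi>_def by (rule P.product_integral_prod) (use J od(1) in \<open>auto simp: hs\<close>)
      also have "\<dots> = (max 0 (ln (norm (1 + ee s)))) ^ card J"
        using od(2) by (simp add: hs)
      finally show ?case .
    qed
  qed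
  finally show ?thesis by (simp add: h_def)
qed


lemma sin_lower:
  fixes x :: real
  assumes "0 \<le> x" "x \<le> pi/3"
  shows "x / 2 \<le> sin x"
proof -
  have "(\<lambda>y. sin y - y/2) 0 \<le> (\<lambda>y. sin y - y/2) x"
  proof (rule DERIV_nonneg_imp_nondecreasing[OF assms(1)])
    fix y assume y: "0 \<le> y" "y \<le> x"
    have "cos (pi/3) \<le> cos y"
      using y assms by (intro cos_monotone_0_pi_le) auto
    hence "cos y - 1/2 \<ge> 0" by (simp add: cos_60)
    moreover have "((\<lambda>y. sin y - y/2) has_real_derivative (cos y - 1/2)) (at y)"
      by (auto intro!: derivative_eq_intros)
    ultimately show "\<exists>d. ((\<lambda>y. sin y - y/2) has_real_derivative d) (at y) \<and> 0 \<le> d" by blast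
  qed
  thus ?thesis by simp
qed

lemma L_bound_small:
  fixes k :: nat and t :: real
  assumes k: "k \<ge> 1" and t: "0 < t" "t \<le> pi/3"
  shows "\<bar>(ln \<bar>2 * sin (t/2)\<bar>) ^ k\<bar> \<le> (2 * real k) ^ k * sqrt 2 * t powr (-1/2)"
proof -
  have s1: "t/4 \<le> sin (t/2)" using sin_lower[of "t/2"] t by (simp add: field_simps)
  have s2: "sin (t/2) \<le> 1/2"
  proof -
    have "sin (t/2) \<le> sin (pi/6)" using t by (intro sin_monotone_2pi_le) auto
    thus ?thesis by (simp add: sin_30)
  qed
  have pos: "0 < 2 * sin (t/2)" using s1 t by simp
  have u: "t/2 \<le> 2 * sin (t/2)" "2 * sin (t/2) \<le> 1" using s1 s2 by auto
  have "\<bar>ln \<bar>2 * sin (t/2)\<bar>\<bar> = - ln (2 * sin (t/2))"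
    using pos u(2) by simp
  also have "\<dots> \<le> - ln (t/2)" using u(1) t by simp
  also have "\<dots> = ln (2/t)" using t by (simp add: ln_div)
  finally have A: "\<bar>ln \<bar>2 * sin (t/2)\<bar>\<bar> \<le> ln (2/t)" .
  have g1: "1 \<le> 2/t" using t pi_less_4 by (simp add: field_simps)
  have "ln (2/t) \<le> (2/t) powr (1/(2*real k)) / (1/(2*real k))"
    by (rule ln_powr_bound[OF g1]) (use k in simp)
  hence B: "ln (2/t) \<le> 2 * real k * (2/t) powr (1/(2*real k))" by (simp add: mult.commute)
  have "\<bar>(ln \<bar>2 * sin (t/2)\<bar>) ^ k\<bar> = \<bar>ln \<bar>2 * sin (t/2)\<bar>\<bar> ^ k" by (simp add: power_abs)
  also have "\<dots> \<le> (2 * real k * (2/t) powr (1/(2*real k))) ^ k"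
    by (rule power_mono) (use A B in auto)
  also have "\<dots> = (2 * real k) ^ k * ((2/t) powr (1/(2*real k))) ^ k"
    by (simp add: power_mult_distrib)
  also have "((2/t) powr (1/(2*real k))) ^ k = (2/t) powr (1/2)"
    using t k by (subst powr_power) (auto simp: field_simps)
  also have "(2/t) powr (1/2) = sqrt 2 * t powr (-1/2)"
    using t by (simp add: powr_divide powr_minus_divide powr_half_sqrt divide_simps)
  finally show ?thesis by (simp add: mult.assoc)
qed

lemma L_cont_ge:
  fixes k :: nat
  shows "continuous_on {pi/3..pi} (\<lambda>t. (ln \<bar>2 * sin (t/2)\<bar>) ^ k)"
proof -
  have "sin (t/2) > 0" if "t \<in> {pi/3..pi}" for t
  proof -
    from that have "pi/3 \<le> t" "t \<le> pi" by auto
    hence "0 < t/2" "t/2 < pi" using pi_gt_zero by linarith+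
    thus ?thesis by (rule sin_gt_zero)
  qed
  hence "\<bar>2 * sin (t/2)\<bar> \<noteq> 0" if "t \<in> {pi/3..pi}" for t using that by force
  thus ?thesis by (intro continuous_intros) (use pi_gt_zero in auto)
qed

lemma L_integrable:
  fixes k :: nat
  assumes k: "k \<ge> 1"
  shows "set_integrable lborel {0<..pi} (\<lambda>t. (ln \<bar>2 * sin (t/2)\<bar>) ^ k)"
proof -
  let ?L = "\<lambda>t::real. (ln \<bar>2 * sin (t/2)\<bar>) ^ k"
  let ?C = "(2 * real k) ^ k * sqrt 2"
  have Lm: "?L \<in> borel_measurable borel" by measurable
  have p: "(\<lambda>x::real. x powr (-1/2)) integrable_on {0<..pi/3}"
    by (rule integrable_on_powr_from_0') auto
  have "(\<lambda>x::real. x powr (-1/2)) absolutely_integrable_on {0<..pi/3}"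
    by (rule nonnegative_absolutely_integrable_1[OF p]) auto
  hence "integrable lebesgue (\<lambda>x. indicator {0<..pi/3} x *\<^sub>R x powr (-1/2))"
    by (simp add: set_integrable_def)
  hence "integrable lborel (\<lambda>x. indicator {0<..pi/3} x *\<^sub>R x powr (-1/2))"
    by (subst (asm) integrable_completion) auto
  hence i1: "integrable lborel (\<lambda>x. ?C * (indicator {0<..pi/3} x *\<^sub>R x powr (-1/2)))"
    by (rule integrable_mult_right)
  have s1: "set_integrable lborel {0<..pi/3} ?L"
    unfolding set_integrable_def
  proof (rule Bochner_Integration.integrable_bound[OF i1])
    show "(\<lambda>x. indicator {0<..pi/3} x *\<^sub>R ?L x) \<in> borel_measurable lborel"
      using Lm by measurable
    show "AE x in lborel. norm (indicator {0<..pi/3} x *\<^sub>R ?L x) \<le> norm (?C * (indicator {0<..pi/3} x *\<^sub>R x powr (-1/2)))"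
    proof (rule AE_I2)
      fix x :: real
      show "norm (indicator {0<..pi/3} x *\<^sub>R ?L x) \<le> norm (?C * (indicator {0<..pi/3} x *\<^sub>R x powr (-1/2)))"
      proof (cases "x \<in> {0<..pi/3}")
        case True
        thus ?thesis using L_bound_small[OF k, of x] by (simp add: abs_mult)
      qed simp
    qed
  qed
  have s2: "set_integrable lborel {pi/3..pi} ?L"
    unfolding set_integrable_def
    by (rule borel_integrable_compact[OF compact_Icc L_cont_ge])
  have "set_integrable lborel ({0<..pi/3} \<union> {pi/3..pi}) ?L"
    by (rule set_integrable_Un[OF s1 s2]) auto
  moreover have "{0<..pi/3} \<union> {pi/3..pi} = {0<..pi}"
    using pi_gt_zero by (auto simp del: pi_gt_zero)
  ultimately show ?thesis by simp
qed


lemma norm_1_minus_exp: "cmod (1 - exp (\<i> * of_real t)) = 2 * \<bar>sin (t/2)\<bar>"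
proof -
  have e: "exp (\<i> * of_real t) = Complex (cos t) (sin t)"
    by (simp add: cis_conv_exp[symmetric] cis.ctr)
  have "cmod (1 - exp (\<i> * of_real t)) = sqrt ((1 - cos t)^2 + (sin t)^2)"
    by (simp add: e cmod_def)
  also have "(1 - cos t)^2 + (sin t)^2 = 2 - 2 * cos t"
    by (simp add: power2_eq_square algebra_simps sin_squared_eq)
  also have "cos t = 1 - 2 * sin (t/2) ^ 2"
    using cos_double_sin[of "t/2"] by simp
  also have "2 - 2 * (1 - 2 * sin (t/2) ^ 2) = (2 * sin (t/2))^2"
    by (simp add: power2_eq_square)
  finally have "cmod (1 - exp (\<i> * of_real t)) = sqrt ((2 * sin (t/2))^2)" .
  thus ?thesis by (simp only: real_sqrt_abs abs_mult)
qed

lemma norm_1_plus_ee: "norm (1 + ee s) = 2 * \<bar>sin ((2 * pi * s - pi)/2)\<bar>"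
proof -
  have "\<i> * of_real (2 * pi * s - pi) = 2 * of_real pi * \<i> * of_real s - \<i> * of_real pi"
    by (simp add: algebra_simps)
  hence "exp (\<i> * of_real (2 * pi * s - pi)) = exp (2 * of_real pi * \<i> * of_real s) / exp (\<i> * of_real pi)"
    by (simp only: exp_diff)
  also have "\<dots> = - ee s" by (simp add: ee_def)
  finally have "1 + ee s = 1 - exp (\<i> * of_real (2 * pi * s - pi))" by simp
  thus ?thesis using norm_1_minus_exp[of "2 * pi * s - pi"] by (simp only:)
qed

lemma max0_ln: "(u::real) \<ge> 0 \<Longrightarrow> max 0 (ln u) = ln (max 1 u)"
proof (cases "u \<le> 1")
  case True
  assume u: "u \<ge> 0"
  have "ln u \<le> 0"
  proof (cases "u = 0")
    case False thus ?thesis using u True by simp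
  qed simp
  thus ?thesis using True by (simp add: max_def)
next
  case False thus ?thesis by (simp add: max_def)
qed

definition HH :: "nat \<Rightarrow> real \<Rightarrow> real" where
  "HH k t = (ln (max 1 (2 * \<bar>sin (t/2)\<bar>))) ^ k"

lemma HH_cont: "continuous_on A (HH k)"
  unfolding HH_def by (intro continuous_intros) auto

lemma G_eq: "(max 0 (ln (norm (1 + ee s)))) ^ k = HH k (2 * pi * s - pi)"
  by (simp add: HH_def norm_1_plus_ee max0_ln)

lemma HH_even: "HH k (- t) = HH k t"
  by (simp add: HH_def)

lemma HH_small: "t \<in> {0..pi/3} \<Longrightarrow> HH k t = (if k = 0 then 1 else 0)"
proof -
  assume t: "t \<in> {0..pi/3}"
  have "sin (t/2) \<le> sin (pi/6)" using t by (intro sin_monotone_2pi_le) auto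
  moreover have "0 \<le> sin (t/2)" using t by (intro sin_ge_zero) auto
  ultimately have "2 * \<bar>sin (t/2)\<bar> \<le> 1" by (simp add: sin_30)
  thus ?thesis by (simp add: HH_def max_def)
qed

lemma HH_big: "t \<in> {pi/3..pi} \<Longrightarrow> HH k t = (ln \<bar>2 * sin (t/2)\<bar>) ^ k"
proof -
  assume t: "t \<in> {pi/3..pi}"
  have "sin (pi/6) \<le> sin (t/2)" using t by (intro sin_monotone_2pi_le) auto
  hence "1 \<le> 2 * \<bar>sin (t/2)\<bar>" by (simp add: sin_30)
  thus ?thesis by (simp add: HH_def max_def abs_mult)
qed

lemma final_integral:
  fixes k :: nat
  assumes k: "k \<ge> 1"
  shows "integral {0..1} (\<lambda>s. (max 0 (ln (norm (1 + ee s)))) ^ k)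
     = integral {pi/3..pi} (\<lambda>t. (ln \<bar>2 * sin (t/2)\<bar>) ^ k) / pi"
proof -
  let ?H = "HH k"
  have Hi: "(?H has_integral integral {-pi..pi} ?H) (cbox (-pi) pi)"
    using integrable_continuous_interval[OF HH_cont] by (simp add: has_integral_integral)
  from has_integral_affinity'[OF Hi, of "2*pi" "-pi"]
  have "((\<lambda>x. ?H (2 * pi * x + - pi)) has_integral integral {-pi..pi} ?H / (2*pi)) {0..1}"
    by (simp add: field_simps)
  hence "((\<lambda>s. (max 0 (ln (norm (1 + ee s)))) ^ k) has_integral integral {-pi..pi} ?H / (2*pi)) {0..1}"
    by (simp add: G_eq)
  hence 1: "integral {0..1} (\<lambda>s. (max 0 (ln (norm (1 + ee s)))) ^ k) = integral {-pi..pi} ?H / (2*pi)"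
    by (rule integral_unique)
  have 2: "integral {-pi..0} ?H + integral {0..pi} ?H = integral {-pi..pi} ?H"
    by (rule Henstock_Kurzweil_Integration.integral_combine) (auto intro: integrable_continuous_interval HH_cont)
  have 3: "integral {-pi..0} ?H = integral {0..pi} ?H"
    using Henstock_Kurzweil_Integration.integral_reflect_real[of pi 0 ?H] by (simp add: HH_even)
  have 4: "integral {0..pi/3} ?H + integral {pi/3..pi} ?H = integral {0..pi} ?H"
    by (rule Henstock_Kurzweil_Integration.integral_combine) (auto intro: integrable_continuous_interval HH_cont)
  have 5: "integral {0..pi/3} ?H = 0"
  proof -
    have "integral {0..pi/3} ?H = integral {0..pi/3} (\<lambda>_::real. 0::real)"
      by (rule Henstock_Kurzweil_Integration.integral_cong) (use k HH_small in auto)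
    thus ?thesis by simp
  qed
  have 6: "integral {pi/3..pi} ?H = integral {pi/3..pi} (\<lambda>t. (ln \<bar>2 * sin (t/2)\<bar>) ^ k)"
    by (rule Henstock_Kurzweil_Integration.integral_cong) (use HH_big in auto)
  show ?thesis using 1 2 3 4 5 6 by (simp add: field_simps)
qed


lemma Ls_side:
  fixes k :: nat
  assumes k: "k \<ge> 1"
  shows "Ls (k + 1) (pi / 3) / pi - Ls (k + 1) pi / pi
       = integral {pi/3..pi} (\<lambda>t. (ln \<bar>2 * sin (t/2)\<bar>) ^ k) / pi"
proof -
  let ?L = "\<lambda>t::real. (ln \<bar>2 * sin (t/2)\<bar>) ^ k"
  have int: "interval_lebesgue_integrable lborel (ereal 0) (ereal pi) ?L"
  proof -
    have "set_integrable lborel {0<..<pi} ?L"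
      by (rule set_integrable_subset[OF L_integrable[OF k]]) auto
    thus ?thesis unfolding interval_lebesgue_integrable_def by (simp add: einterval_eq)
  qed
  have sum: "(LBINT t=ereal 0..ereal (pi/3). ?L t) + (LBINT t=ereal (pi/3)..ereal pi. ?L t)
        = (LBINT t=ereal 0..ereal pi. ?L t)"
    by (rule interval_integral_sum) (use int in \<open>simp add: min_def max_def\<close>)
  have si: "set_integrable lborel {pi/3..pi} ?L"
    unfolding set_integrable_def
    by (rule borel_integrable_compact[OF compact_Icc L_cont_ge])
  have eq: "(LBINT t=ereal (pi/3)..ereal pi. ?L t) = integral {pi/3..pi} ?L"
    by (rule interval_integral_eq_integral) (use si in auto)
  have "Ls (k + 1) (pi / 3) = - (LBINT t=ereal 0..ereal (pi/3). ?L t)"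
    by (simp add: Ls_def zero_ereal_def)
  moreover have "Ls (k + 1) pi = - (LBINT t=ereal 0..ereal pi. ?L t)"
    by (simp add: Ls_def zero_ereal_def)
  ultimately show ?thesis using sum eq by (simp add: diff_divide_distrib[symmetric])
qed


theorem theorem2p1:
  fixes k :: nat
  assumes "k \<ge> 1"
  shows "multi_mahler (k + 1) (map (\<lambda>j. (\<lambda>z. 1 + z 0 + z j)) [1..<k+1])
         = Ls (k + 1) (pi / 3) / pi - Ls (k + 1) pi / pi"
proof -
  let ?J = "{1..<k+1}"
  have J: "finite ?J" "0 \<notin> ?J" by auto
  have ins: "{..<k+1} = insert 0 ?J" by auto
  have prod: "(\<Prod>P\<leftarrow>map (\<lambda>j. (\<lambda>z. 1 + z 0 + z j)) [1..<k+1]. ln (cmod (P (\<lambda>i. exp (2 * of_real pi * \<i> * of_real (t i))))))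
      = (\<Prod>j\<in>?J. ln (cmod (1 + ee (t 0) + ee (t j))))" for t :: "nat \<Rightarrow> real"
  proof -
    have A: "map (\<lambda>P. ln (cmod (P (\<lambda>i. exp (2 * of_real pi * \<i> * of_real (t i)))))) (map (\<lambda>j. (\<lambda>z. 1 + z 0 + z j)) [1..<k+1])
        = map (\<lambda>j. ln (cmod (1 + ee (t 0) + ee (t j)))) [1..<k+1]"
      by (simp add: ee_def)
    have B: "prod_list (map (\<lambda>j. ln (cmod (1 + ee (t 0) + ee (t j)))) [1..<k+1])
        = (\<Prod>j\<in>set [1..<k+1]. ln (cmod (1 + ee (t 0) + ee (t j))))"
      by (rule prod.distinct_set_conv_list[symmetric]) simp
    have C: "set [1..<k+1] = ?J" by (simp only: set_upt)
    show ?thesis by (simp only: A B C)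
  qed
  have "multi_mahler (k + 1) (map (\<lambda>j. (\<lambda>z. 1 + z 0 + z j)) [1..<k+1])
      = integral\<^sup>L (PiM (insert 0 ?J) (\<lambda>_. MM)) (\<lambda>t. \<Prod>j\<in>?J. ln (cmod (1 + ee (t 0) + ee (t j))))"
    by (simp only: multi_mahler_def ins prod)
  also have "\<dots> = integral\<^sup>L MM (\<lambda>s. (max 0 (ln (norm (1 + ee s)))) ^ card ?J)"
    by (rule main_value[OF J])
  also have "card ?J = k" by simp
  also have "integral\<^sup>L MM (\<lambda>s. (max 0 (ln (norm (1 + ee s)))) ^ k)
      = integral {0..1} (\<lambda>s. (max 0 (ln (norm (1 + ee s)))) ^ k)"
  proof (rule cont_MM(2))
    have "continuous_on {0..1} (\<lambda>s. HH k (2 * pi * s - pi))"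
      by (rule continuous_on_compose2[OF HH_cont[of UNIV]]) (auto intro!: continuous_intros)
    thus "continuous_on {0..1} (\<lambda>s. (max 0 (ln (norm (1 + ee s)))) ^ k)"
      by (simp add: G_eq)
  qed
  also have "\<dots> = integral {pi/3..pi} (\<lambda>t. (ln \<bar>2 * sin (t/2)\<bar>) ^ k) / pi"
    by (rule final_integral[OF assms])
  also have "\<dots> = Ls (k + 1) (pi / 3) / pi - Ls (k + 1) pi / pi"
    by (rule Ls_side[OF assms, symmetric])
  finally show ?thesis .
qed

end
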